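(* Let $f:\mathbb{R}^n\to\mathbb{R}^n$ be locally Lipschitz, and let $V_1,V_2\in C^1(\mathbb{R}^n)$, continuous $N_1,N_2:\mathbb{R}^n\to[0,\infty)$, and continuous $h:[0,\infty)\to[0,\infty)$ with $h(0)=0$ and $\sup_{r>0}h(r)/r<\infty$ satisfy $\nabla V_1\cdot f\le -N_1$ and $\nabla V_2\cdot f\le -N_2+h(N_1)$ on $\mathbb{R}^n$. Assume every solution of $\dot x=f(x)$ is defined and bounded on $[0,\infty)$ and that along every solution the maps $t\mapsto N_i(x(t))$ are uniformly continuous on $[0,\infty)$. Let $E:=\{x\in\mathbb{R}^n:N_1(x)=0,\ N_2(x)=0\}$. If every point of $E$ is Lyapunov stable, then every solution converges as $t\to\infty$ to a point of $E$, and $E$ is pointwise asymptotically stable.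
   Context: A point $z$ is Lyapunov stable for $\dot x=f(x)$ if for every neighborhood $U$ of $z$ there is a neighborhood $V\subset U$ of $z$ such that every solution starting in $V$ remains in $U$ for all $t\ge0$. A set $Z$ is pointwise asymptotically stable (PAS) if (A1) every $z\in Z$ is Lyapunov stable and (A2) solutions starting sufficiently near $Z$ converge, with $\lim_{t\to\infty}x(t)\in Z$. *)

theory Defs
  imports "HOL-Analysis.Analysis"
begin

definition fwd_solution :: "('a::real_normed_vector \<Rightarrow> 'a) \<Rightarrow> (real \<Rightarrow> 'a) \<Rightarrow> bool" where
  "fwd_solution f x \<longleftrightarrow>
     (\<forall>t\<in>{0..}. (x has_vector_derivative f (x t)) (at t within {0..}))"

definition lyapunov_stable :: "('a::real_normed_vector \<Rightarrow> 'a) \<Rightarrow> 'a \<Rightarrow> bool" where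
  "lyapunov_stable f z \<longleftrightarrow>
     (\<forall>U. open U \<and> z \<in> U \<longrightarrow>
        (\<exists>V. open V \<and> z \<in> V \<and> V \<subseteq> U \<and>
           (\<forall>x. fwd_solution f x \<and> x 0 \<in> V \<longrightarrow> (\<forall>t\<ge>0. x t \<in> U))))"

definition pointwise_asymp_stable :: "('a::real_normed_vector \<Rightarrow> 'a) \<Rightarrow> 'a set \<Rightarrow> bool" where
  "pointwise_asymp_stable f Z \<longleftrightarrow>
     (\<forall>z\<in>Z. lyapunov_stable f z) \<and>
     (\<exists>W. open W \<and> Z \<subseteq> W \<and>
        (\<forall>x. fwd_solution f x \<and> x 0 \<in> W \<longrightarrow> (\<exists>z\<in>Z. (x \<longlongrightarrow> z) at_top)))"

end

theory Submission
  imports Defs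
begin

lemma decr_step:
  fixes \<phi> d g :: "real \<Rightarrow> real"
  assumes der: "\<And>t. t > 0 \<Longrightarrow> (\<phi> has_real_derivative d t) (at t)"
    and dg: "\<And>t. t > 0 \<Longrightarrow> d t \<le> - g t"
    and "0 < a" "a < b" and gm: "\<And>t. a \<le> t \<Longrightarrow> t \<le> b \<Longrightarrow> g t \<ge> m"
  shows "\<phi> b \<le> \<phi> a - m * (b - a)"
proof -
  have "continuous_on {a..b} \<phi>"
  proof (intro continuous_at_imp_continuous_on ballI)
    fix t assume "t \<in> {a..b}"
    hence "t > 0" using assms(3) by auto
    thus "isCont \<phi> t" using der DERIV_isCont by blast
  qed
  moreover have "\<And>t. a < t \<Longrightarrow> t < b \<Longrightarrow> (\<phi> has_derivative (*) (d t)) (at t)"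
    using der assms(3) has_field_derivative_def by fastforce
  ultimately obtain \<xi> where xi: "a < \<xi>" "\<xi> < b" "\<phi> b - \<phi> a = d \<xi> * (b - a)"
    using mvt[OF assms(4), of \<phi> "\<lambda>t. (*) (d t)"] by blast
  have "d \<xi> \<le> - m" using dg[of \<xi>] gm[of \<xi>] xi assms(3) by auto
  hence "d \<xi> * (b - a) \<le> - m * (b - a)" using assms(4) by (intro mult_right_mono) auto
  thus ?thesis using xi by linarith
qed

lemma barbalat:
  fixes \<phi> d g :: "real \<Rightarrow> real"
  assumes der: "\<And>t. t > 0 \<Longrightarrow> (\<phi> has_real_derivative d t) (at t)"
    and dg: "\<And>t. t > 0 \<Longrightarrow> d t \<le> - g t"
    and gnn: "\<And>t. g t \<ge> 0"
    and uc: "uniformly_continuous_on {0..} g"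
    and bb: "\<And>t. t > 0 \<Longrightarrow> \<phi> t \<ge> M"
  shows "(g \<longlongrightarrow> 0) at_top"
proof (rule ccontr)
  assume nc: "\<not> (g \<longlongrightarrow> 0) at_top"
  then obtain e where e: "e > 0" and fr: "\<And>T. \<exists>t\<ge>T. g t \<ge> e"
  proof -
    have "\<not> (\<forall>e>0. \<exists>T. \<forall>t\<ge>T. dist (g t) 0 < e)"
      using nc by (simp add: tendsto_iff eventually_at_top_linorder)
    then obtain e where "e > 0" "\<And>T. \<exists>t\<ge>T. dist (g t) 0 \<ge> e" by (meson not_le)
    thus ?thesis using that gnn by auto
  qed
  obtain \<delta> where \<delta>: "\<delta> > 0" and ucd: "\<And>s t. s \<in> {0..} \<Longrightarrow> t \<in> {0..} \<Longrightarrow> dist s t < \<delta> \<Longrightarrow> dist (g s) (g t) < e/2"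
    using uc e unfolding uniformly_continuous_on_def by (meson half_gt_zero)
  define \<eta> where "\<eta> = e/2 * (\<delta>/2)"
  have \<eta>: "\<eta> > 0" using e \<delta> by (simp add: \<eta>_def)
  have mono: "\<phi> b \<le> \<phi> a" if "0 < a" "a \<le> b" for a b
  proof (cases "a = b")
    case False
    thus ?thesis using decr_step[OF der dg, of a b 0] that gnn by auto
  qed simp
  have step: "\<And>t. t \<ge> 1 \<Longrightarrow> \<exists>t'\<ge>1. \<phi> t' \<le> \<phi> t - \<eta>"
  proof -
    fix t :: real assume t: "t \<ge> 1"
    obtain s where s: "s \<ge> t" "g s \<ge> e" using fr by blast
    have "\<phi> (s + \<delta>/2) \<le> \<phi> s - e/2 * (s + \<delta>/2 - s)"
    proof (rule decr_step[OF der dg])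
      fix u assume u: "s \<le> u" "u \<le> s + \<delta>/2"
      have "dist (g u) (g s) < e/2" using u t s \<delta> by (intro ucd) (auto simp: dist_real_def)
      thus "g u \<ge> e/2" using s by (auto simp: dist_real_def abs_if split: if_splits)
    qed (use t s \<delta> in auto)
    also have "\<phi> s \<le> \<phi> t" using mono t s by auto
    finally show "\<exists>t'\<ge>1. \<phi> t' \<le> \<phi> t - \<eta>" using t s \<delta> by (intro exI[of _ "s + \<delta>/2"]) (auto simp: \<eta>_def)
  qed
  have "\<exists>t\<ge>1. \<phi> t \<le> \<phi> 1 - real n * \<eta>" for n
  proof (induction n)
    case 0 thus ?case by auto
  next
    case (Suc n)
    then obtain t where "t \<ge> 1" "\<phi> t \<le> \<phi> 1 - real n * \<eta>" by blast
    with step[of t] show ?case by (auto simp: algebra_simps) 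
  qed
  moreover obtain n where n: "\<phi> 1 - M < real n * \<eta>"
    using reals_Archimedean3[OF \<eta>] by blast
  ultimately obtain t where "t \<ge> 1" "\<phi> t \<le> \<phi> 1 - real n * \<eta>" by blast
  with bb[of t] n show False by auto
qed

lemma shift_solution:
  assumes "fwd_solution f x" "T \<ge> 0"
  shows "fwd_solution f (\<lambda>s. x (T + s))"
  unfolding fwd_solution_def
proof
  fix s :: real assume s: "s \<in> {0..}"
  have 1: "((\<lambda>s. T + s) has_vector_derivative 1) (at s within {0..})"
    by (auto intro!: derivative_eq_intros)
  have "(x has_vector_derivative f (x (T + s))) (at (T + s) within {0..})"
    using assms s unfolding fwd_solution_def by auto
  hence 2: "(x has_vector_derivative f (x (T + s))) (at (T + s) within (\<lambda>s. T + s) ` {0..})"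
    by (rule has_vector_derivative_within_subset) (use assms in auto)
  from vector_diff_chain_within[OF 1 2]
  show "((\<lambda>s. x (T + s)) has_vector_derivative f (x (T + s))) (at s within {0..})"
    by (simp add: o_def)
qed

lemma sol_at:
  assumes "fwd_solution f x" "t > 0"
  shows "(x has_vector_derivative f (x t)) (at t)"
proof -
  have "(x has_vector_derivative f (x t)) (at t within {0..})"
    using assms unfolding fwd_solution_def by auto
  hence "(x has_vector_derivative f (x t)) (at t within {0<..})"
    by (rule has_vector_derivative_within_subset) auto
  thus ?thesis using at_within_open[of t "{0<..}"] assms(2) by simp
qed

lemma chain_V:
  fixes V :: "'a::euclidean_space \<Rightarrow> real"
  assumes "(V has_derivative (\<lambda>v. G \<bullet> v)) (at (x t))" "(x has_vector_derivative w) (at t)"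
  shows "((\<lambda>t. V (x t)) has_real_derivative G \<bullet> w) (at t)"
proof -
  have "(x has_derivative (\<lambda>h. h *\<^sub>R w)) (at t)" using assms(2) by (simp add: has_vector_derivative_def)
  from has_derivative_compose[OF this assms(1)]
  have "((\<lambda>t. V (x t)) has_derivative (\<lambda>h. G \<bullet> (h *\<^sub>R w))) (at t)" by simp
  moreover have "(\<lambda>h. G \<bullet> (h *\<^sub>R w)) = (*) (G \<bullet> w)" by (auto simp: fun_eq_iff)
  ultimately show ?thesis unfolding has_field_derivative_def by simp
qed

theorem corollary2p6:
  fixes f :: "'a::euclidean_space \<Rightarrow> 'a"
    and V1 V2 :: "'a \<Rightarrow> real" and G1 G2 :: "'a \<Rightarrow> 'a"
    and N1 N2 :: "'a \<Rightarrow> real" and h :: "real \<Rightarrow> real"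
  assumes lip: "local_lipschitz (UNIV :: real set) UNIV (\<lambda>_. f)"
    and V1_C1: "\<And>x. (V1 has_derivative (\<lambda>v. G1 x \<bullet> v)) (at x)" "continuous_on UNIV G1"
    and V2_C1: "\<And>x. (V2 has_derivative (\<lambda>v. G2 x \<bullet> v)) (at x)" "continuous_on UNIV G2"
    and N_cont: "continuous_on UNIV N1" "continuous_on UNIV N2"
    and N_nonneg: "\<And>x. N1 x \<ge> 0" "\<And>x. N2 x \<ge> 0"
    and h_cont: "continuous_on {0..} h"
    and h_nonneg: "\<And>r. r \<ge> 0 \<Longrightarrow> h r \<ge> 0"
    and h0: "h 0 = 0"
    and h_lin: "bdd_above ((\<lambda>r. h r / r) ` {0<..})"
    and dec1: "\<And>x. G1 x \<bullet> f x \<le> - N1 x"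
    and dec2: "\<And>x. G2 x \<bullet> f x \<le> - N2 x + h (N1 x)"
    and complete: "\<And>x0. \<exists>x. fwd_solution f x \<and> x 0 = x0"
    and bounded_sol: "\<And>x. fwd_solution f x \<Longrightarrow> bounded (x ` {0..})"
    and unif1: "\<And>x. fwd_solution f x \<Longrightarrow> uniformly_continuous_on {0..} (\<lambda>t. N1 (x t))"
    and unif2: "\<And>x. fwd_solution f x \<Longrightarrow> uniformly_continuous_on {0..} (\<lambda>t. N2 (x t))"
    and stable: "\<And>z. z \<in> {x. N1 x = 0 \<and> N2 x = 0} \<Longrightarrow> lyapunov_stable f z"
  shows "(\<forall>x. fwd_solution f x \<longrightarrow> (\<exists>z\<in>{x. N1 x = 0 \<and> N2 x = 0}. (x \<longlongrightarrow> z) at_top))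
         \<and> pointwise_asymp_stable f {x. N1 x = 0 \<and> N2 x = 0}"
proof -
  define E where "E = {x. N1 x = 0 \<and> N2 x = 0}"
  obtain c where c: "\<And>r. r > 0 \<Longrightarrow> h r / r \<le> c"
    using h_lin unfolding bdd_above_def by auto
  define K where "K = \<bar>c\<bar> + 1"
  have hle: "h r \<le> c * r" if "r \<ge> 0" for r
  proof (cases "r = 0")
    case True thus ?thesis using h0 by simp
  next
    case False
    hence "r > 0" using that by simp
    hence "h r = (h r / r) * r" by simp
    also have "\<dots> \<le> c * r" using c[OF \<open>r > 0\<close>] \<open>r > 0\<close> by (intro mult_right_mono) auto
    finally show ?thesis .
  qed
  have contV1: "continuous_on UNIV V1"
    using V1_C1(1) has_derivative_continuous by (blast intro: continuous_at_imp_continuous_on)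
  have contV2: "continuous_on UNIV V2"
    using V2_C1(1) has_derivative_continuous by (blast intro: continuous_at_imp_continuous_on)
  have convN: "((\<lambda>t. N1 (x t) + N2 (x t)) \<longlongrightarrow> 0) at_top" if sol: "fwd_solution f x" for x
  proof -
    define \<phi> where "\<phi> t = V2 (x t) + K * V1 (x t)" for t
    define d where "d t = G2 (x t) \<bullet> f (x t) + K * (G1 (x t) \<bullet> f (x t))" for t
    have der: "(\<phi> has_real_derivative d t) (at t)" if "t > 0" for t
    proof -
      have xd: "(x has_vector_derivative f (x t)) (at t)" using sol_at[OF sol that] .
      show ?thesis unfolding \<phi>_def[abs_def] d_def
        by (intro DERIV_add DERIV_cmult chain_V[OF _ xd] V1_C1(1) V2_C1(1))
    qed
    have dg: "d t \<le> - (N1 (x t) + N2 (x t))" for t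
    proof -
      let ?n = "N1 (x t)"
      have "?n \<ge> 0" using N_nonneg(1) .
      have a: "G2 (x t) \<bullet> f (x t) \<le> - N2 (x t) + c * ?n"
        using dec2[of "x t"] hle[OF \<open>?n \<ge> 0\<close>] by linarith
      have b: "K * (G1 (x t) \<bullet> f (x t)) \<le> K * (- ?n)"
        using dec1[of "x t"] by (intro mult_left_mono) (auto simp: K_def)
      have "(c - K + 1) * ?n \<le> 0"
        using \<open>?n \<ge> 0\<close> by (intro mult_nonpos_nonneg) (auto simp: K_def)
      thus ?thesis using a b unfolding d_def by (simp add: algebra_simps)
    qed
    have "bounded (x ` {0..})" using bounded_sol[OF sol] .
    hence "compact (closure (x ` {0..}))" by (simp add: compact_closure)
    moreover have "continuous_on (closure (x ` {0..})) (\<lambda>y. V2 y + K * V1 y)"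
      by (intro continuous_intros continuous_on_subset[OF contV1] continuous_on_subset[OF contV2]) auto
    ultimately have "compact ((\<lambda>y. V2 y + K * V1 y) ` closure (x ` {0..}))"
      by (rule compact_continuous_image[rotated])
    hence "bdd_below ((\<lambda>y. V2 y + K * V1 y) ` closure (x ` {0..}))"
      by (intro bounded_imp_bdd_below compact_imp_bounded)
    then obtain M where M: "\<And>y. y \<in> closure (x ` {0..}) \<Longrightarrow> M \<le> V2 y + K * V1 y"
      unfolding bdd_below_def by auto
    have bb: "\<phi> t \<ge> M" if "t > 0" for t
      unfolding \<phi>_def using that by (intro M) (auto intro: closure_subset[THEN subsetD])
    show ?thesis
    proof (rule barbalat[OF der _ _ _ bb])
      show "\<And>t. 0 < t \<Longrightarrow> d t \<le> - (N1 (x t) + N2 (x t))" using dg by blast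
      show "\<And>t. 0 \<le> N1 (x t) + N2 (x t)" using N_nonneg by (simp add: add_nonneg_nonneg)
      show "uniformly_continuous_on {0..} (\<lambda>t. N1 (x t) + N2 (x t))"
        by (intro uniformly_continuous_on_add unif1 unif2 sol)
    qed auto
  qed
  have conv: "\<exists>z\<in>E. (x \<longlongrightarrow> z) at_top" if sol: "fwd_solution f x" for x
  proof -
    have c1: "((\<lambda>t. N1 (x t)) \<longlongrightarrow> 0) at_top"
      by (rule tendsto_sandwich[OF _ _ tendsto_const convN[OF sol]]) (use N_nonneg in auto)
    have c2: "((\<lambda>t. N2 (x t)) \<longlongrightarrow> 0) at_top"
      by (rule tendsto_sandwich[OF _ _ tendsto_const convN[OF sol]]) (use N_nonneg in auto)
    have "bounded (range (\<lambda>n::nat. x (real n)))"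
      by (rule bounded_subset[OF bounded_sol[OF sol]]) auto
    then obtain z r where r: "strict_mono r" and lz: "((\<lambda>n. x (real n)) \<circ> r) \<longlonglongrightarrow> z"
      using bounded_imp_convergent_subsequence by blast
    have lz': "(\<lambda>n. x (real (r n))) \<longlonglongrightarrow> z" using lz by (simp add: o_def)
    have rr: "filterlim (\<lambda>n. real (r n)) at_top sequentially"
      by (rule filterlim_compose[OF filterlim_real_sequentially filterlim_subseq[OF r]])
    have "(\<lambda>n. N1 (x (real (r n)))) \<longlonglongrightarrow> 0" by (rule filterlim_compose[OF c1 rr])
    moreover have "(\<lambda>n. N1 (x (real (r n)))) \<longlonglongrightarrow> N1 z"
      by (rule continuous_on_tendsto_compose[OF N_cont(1) lz']) auto
    ultimately have z1: "N1 z = 0" using LIMSEQ_unique by blast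
    have "(\<lambda>n. N2 (x (real (r n)))) \<longlonglongrightarrow> 0" by (rule filterlim_compose[OF c2 rr])
    moreover have "(\<lambda>n. N2 (x (real (r n)))) \<longlonglongrightarrow> N2 z"
      by (rule continuous_on_tendsto_compose[OF N_cont(2) lz']) auto
    ultimately have z2: "N2 z = 0" using LIMSEQ_unique by blast
    have zE: "z \<in> E" using z1 z2 by (simp add: E_def)
    have "(x \<longlongrightarrow> z) at_top"
      unfolding tendsto_iff
    proof (intro allI impI)
      fix e :: real assume e: "e > 0"
      obtain V where V: "open V" "z \<in> V"
        and Vs: "\<And>y. fwd_solution f y \<Longrightarrow> y 0 \<in> V \<Longrightarrow> (\<forall>t\<ge>0. y t \<in> ball z e)"
        using stable[of z] zE e unfolding lyapunov_stable_def E_def by (meson open_ball centre_in_ball)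
      have ev1: "eventually (\<lambda>n. x (real (r n)) \<in> V) sequentially"
        using lz' V by (rule topological_tendstoD)
      have ev2: "eventually (\<lambda>n. real (r n) \<ge> 0) sequentially" by simp
      obtain n where n: "x (real (r n)) \<in> V"
        using eventually_happens'[OF _ ev1] by auto
      define T where "T = real (r n)"
      have T: "T \<ge> 0" by (simp add: T_def)
      have "\<forall>s\<ge>0. x (T + s) \<in> ball z e"
        using Vs[OF shift_solution[OF sol T]] n by (simp add: T_def)
      hence "\<forall>t\<ge>T. dist (x t) z < e"
        by (metis add_diff_cancel_left' diff_ge_0_iff_ge dist_commute mem_ball add.commute diff_add_cancel)
      thus "eventually (\<lambda>t. dist (x t) z < e) at_top"
        unfolding eventually_at_top_linorder by blast
    qed
    thus ?thesis using zE by blast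
  qed
  show ?thesis
    unfolding pointwise_asymp_stable_def E_def[symmetric]
  proof (intro conjI allI impI ballI)
    show "\<And>x. fwd_solution f x \<Longrightarrow> \<exists>z\<in>E. (x \<longlongrightarrow> z) at_top" using conv by blast
    show "\<And>z. z \<in> E \<Longrightarrow> lyapunov_stable f z" using stable by (simp add: E_def)
    show "\<exists>W. open W \<and> E \<subseteq> W \<and> (\<forall>x. fwd_solution f x \<and> x 0 \<in> W \<longrightarrow> (\<exists>z\<in>E. (x \<longlongrightarrow> z) at_top))"
      using conv by (intro exI[of _ UNIV]) auto
  qed
qed

end
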